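(* Let $\Bbbk$ be an algebraically closed field of characteristic $2$ and let $\mathfrak{u}(\mathfrak{m})$ be the algebra generated by $a,b,c$ with relations $ab+ba=c$, $ac+ca=a$, $bc+cb=b$, $a^4=b^4=0$, $c^2+c=0$. If $0\to V_1\to U\to V_0\to 0$ is an exact sequence of $\mathfrak{u}(\mathfrak{m})$-modules, then $U\simeq V_{\vartheta,\lambda,\mu}$ for some $\vartheta,\lambda,\mu\in\Bbbk$. Moreover $\dim\operatorname{Ext}^1_{\mathfrak{u}(\mathfrak{m})}(V_0,V_1)=2$.
   Context: $V_0$ is the one-dimensional module on which $a,b,c$ act by $0$. $V_1$ is the three-dimensional module with basis $v_1,v_2,v_3$ and action $av_1=v_2$, $av_2=v_3$, $av_3=0$; $bv_1=0$, $bv_2=v_1$, $bv_3=v_2$; $cv_1=v_1$, $cv_2=0$, $cv_3=v_3$. For $\vartheta,\lambda,\mu\in\Bbbk$, $V_{\vartheta,\lambda,\mu}$ is $\Bbbk^4$ with standard basis $e_1,\dots,e_4$ and action $ae_1=\vartheta e_2$, $ae_2=e_3$, $ae_3=e_4$, $ae_4=0$; $be_1=\lambda e_3+\mu e_4$, $be_2=0$, $be_3=e_2$, $be_4=e_3$; $ce_1=\lambda e_4$, $ce_2=e_2$, $ce_3=0$, $ce_4=e_4$. *)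

theory Defs
  imports "HOL-Analysis.Analysis" "HOL-Computational_Algebra.Polynomial" "HOL-Library.Numeral_Type" "HOL-Library.Function_Algebras"
begin

text \<open>Generators a, b, c of the restricted enveloping algebra u(m).\<close>
datatype gen = Ga | Gb | Gc

text \<open>A (finite-dimensional) u(m)-module on k^n, given by the matrices of a, b, c
  (entry (i,j) is the coefficient of e_i in x e_j).  The defining relations of u(m).\<close>
definition is_umod :: "(gen \<Rightarrow> 'k::field ^'n^'n) \<Rightarrow> bool" where
  "is_umod \<rho> \<longleftrightarrow>
     \<rho> Ga ** \<rho> Gb + \<rho> Gb ** \<rho> Ga = \<rho> Gc \<and>
     \<rho> Ga ** \<rho> Gc + \<rho> Gc ** \<rho> Ga = \<rho> Ga \<and>
     \<rho> Gb ** \<rho> Gc + \<rho> Gc ** \<rho> Gb = \<rho> Gb \<and>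
     \<rho> Ga ** \<rho> Ga ** \<rho> Ga ** \<rho> Ga = 0 \<and>
     \<rho> Gb ** \<rho> Gb ** \<rho> Gb ** \<rho> Gb = 0 \<and>
     \<rho> Gc ** \<rho> Gc + \<rho> Gc = 0"

text \<open>F : k^m \<rightarrow> k^n (matrix) is a module homomorphism from (k^m, \<sigma>) to (k^n, \<rho>).\<close>
definition is_umod_hom :: "(gen \<Rightarrow> 'k::field ^'m^'m) \<Rightarrow> (gen \<Rightarrow> 'k^'n^'n) \<Rightarrow> 'k^'m^'n \<Rightarrow> bool" where
  "is_umod_hom \<sigma> \<rho> F \<longleftrightarrow> (\<forall>g. F ** \<sigma> g = \<rho> g ** F)"

definition umod_iso :: "(gen \<Rightarrow> 'k::field ^'m^'m) \<Rightarrow> (gen \<Rightarrow> 'k^'n^'n) \<Rightarrow> bool" where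
  "umod_iso \<sigma> \<rho> \<longleftrightarrow> (\<exists>F::'k^'m^'n. invertible F \<and> is_umod_hom \<sigma> \<rho> F)"

text \<open>The modules V_0, V_1, V_{\<theta>,\<lambda>,\<mu>}.  Basis indices: for type 3 the elements 1,2,3;
  for type 4 the elements 1,2,3,4 (numerals in the residue types, pairwise distinct).\<close>
definition V0 :: "gen \<Rightarrow> 'k::field ^1^1" where
  "V0 g = 0"

definition V1 :: "gen \<Rightarrow> 'k::field ^3^3" where
  "V1 g = (case g of
     Ga \<Rightarrow> (\<chi> i j. if (i = 2 \<and> j = 1) \<or> (i = 3 \<and> j = 2) then 1 else 0)
   | Gb \<Rightarrow> (\<chi> i j. if (i = 1 \<and> j = 2) \<or> (i = 2 \<and> j = 3) then 1 else 0)
   | Gc \<Rightarrow> (\<chi> i j. if (i = 1 \<and> j = 1) \<or> (i = 3 \<and> j = 3) then 1 else 0))"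

definition Vtlm :: "'k::field \<Rightarrow> 'k \<Rightarrow> 'k \<Rightarrow> gen \<Rightarrow> 'k^4^4" where
  "Vtlm th la mu g = (case g of
     Ga \<Rightarrow> (\<chi> i j. if i = 2 \<and> j = 1 then th
                  else if (i = 3 \<and> j = 2) \<or> (i = 4 \<and> j = 3) then 1 else 0)
   | Gb \<Rightarrow> (\<chi> i j. if i = 3 \<and> j = 1 then la else if i = 4 \<and> j = 1 then mu
                  else if (i = 2 \<and> j = 3) \<or> (i = 3 \<and> j = 4) then 1 else 0)
   | Gc \<Rightarrow> (\<chi> i j. if i = 4 \<and> j = 1 then la
                  else if (i = 2 \<and> j = 2) \<or> (i = 4 \<and> j = 4) then 1 else 0))"

text \<open>Ext^1(M,N) computed from extensions: an extension of M by N is N \<oplus> M with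
  block upper triangular action [[N_x, D_x],[0, M_x]]; the cocycles Z are the D making this
  a module, the coboundaries B are those giving split extensions (D_x = N_x h - h M_x).
  Ext^1(M,N) = Z/B, so its dimension is dim Z - dim B.\<close>
definition block_mod :: "(gen \<Rightarrow> 'k::field ^'m^'m) \<Rightarrow> (gen \<Rightarrow> 'k^'n^'n) \<Rightarrow> (gen \<Rightarrow> 'k^'m^'n)
    \<Rightarrow> gen \<Rightarrow> 'k^('n + 'm)^('n + 'm)" where
  "block_mod M N D g = (\<chi> i j. case (i, j) of
       (Inl i', Inl j') \<Rightarrow> N g $ i' $ j'
     | (Inl i', Inr j') \<Rightarrow> D g $ i' $ j'
     | (Inr i', Inl j') \<Rightarrow> 0
     | (Inr i', Inr j') \<Rightarrow> M g $ i' $ j')"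

definition cocycles :: "(gen \<Rightarrow> 'k::field ^'m^'m) \<Rightarrow> (gen \<Rightarrow> 'k^'n^'n) \<Rightarrow> (gen \<Rightarrow> 'k^'m^'n) set" where
  "cocycles M N = {D. is_umod (block_mod M N D)}"

definition coboundaries :: "(gen \<Rightarrow> 'k::field ^'m^'m) \<Rightarrow> (gen \<Rightarrow> 'k^'n^'n) \<Rightarrow> (gen \<Rightarrow> 'k^'m^'n) set" where
  "coboundaries M N = {D. \<exists>h::'k^'m^'n. \<forall>g. D g = N g ** h - h ** M g}"

definition hom_scale :: "'k::field \<Rightarrow> (gen \<Rightarrow> 'k^'m^'n) \<Rightarrow> (gen \<Rightarrow> 'k^'m^'n)" where
  "hom_scale c D = (\<lambda>g. \<chi> i j. c * D g $ i $ j)"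

definition ext1_dim :: "(gen \<Rightarrow> 'k::field ^'m^'m) \<Rightarrow> (gen \<Rightarrow> 'k^'n^'n) \<Rightarrow> nat" where
  "ext1_dim M N = vector_space.dim hom_scale (cocycles M N) - vector_space.dim hom_scale (coboundaries M N)"

end

theory Submission
  imports Defs
begin


lemma char2: "CHAR('k::field) = 2 \<Longrightarrow> (2::'k) = 0"
  using of_nat_CHAR[where 'a='k] by simp

lemma vs_hom_scale: "vector_space (hom_scale :: 'k::field \<Rightarrow> (gen \<Rightarrow> 'k^'m^'n) \<Rightarrow> _)"
  by unfold_locales (auto simp: hom_scale_def fun_eq_iff vec_eq_iff algebra_simps)

lemma dim_param:
  fixes \<phi> :: "'k::field^'p \<Rightarrow> (gen \<Rightarrow> 'k^'m^'n)"
  assumes add: "\<And>x y. \<phi> (x + y) = \<phi> x + \<phi> y"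
    and sc: "\<And>c x. \<phi> (c *s x) = hom_scale c (\<phi> x)"
    and inj: "inj \<phi>"
  shows "vector_space.dim hom_scale (range \<phi>) = CARD('p)"
proof -
  interpret p: finite_dimensional_vector_space_pair_1 "(*s)" cart_basis hom_scale
    by (intro finite_dimensional_vector_space_pair_1.intro vec.finite_dimensional_vector_space_axioms vs_hom_scale)
  have lin: "Vector_Spaces.linear (*s) hom_scale \<phi>"
    using add sc vs_hom_scale by (auto simp: Vector_Spaces.linear_iff vec.vector_space_axioms)
  have "vector_space.dim hom_scale (range \<phi>) = vec.dim (UNIV :: ('k^'p) set)"
    using p.dim_image_eq[OF lin, of UNIV] inj by simp
  also have "\<dots> = CARD('p)" by (simp add: card_cart_basis)
  finally show ?thesis .
qed


definition blk :: "'k::field^'n^'n \<Rightarrow> 'k^'m^'n \<Rightarrow> 'k^'m^'m \<Rightarrow> 'k^('n+'m)^('n+'m)" where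
  "blk A B C = (\<chi> i j. case (i, j) of
       (Inl i', Inl j') \<Rightarrow> A $ i' $ j'
     | (Inl i', Inr j') \<Rightarrow> B $ i' $ j'
     | (Inr i', Inl j') \<Rightarrow> 0
     | (Inr i', Inr j') \<Rightarrow> C $ i' $ j')"

lemma block_mod_blk: "block_mod M N D g = blk (N g) (D g) (M g)"
  by (simp add: block_mod_def blk_def)

lemma blk_mult: "blk A B C ** blk A' B' C' = blk (A ** A') (A ** B' + B ** C') (C ** C')"
  unfolding blk_def matrix_matrix_mult_def
  by (auto simp: vec_eq_iff UNIV_Plus_UNIV[symmetric] sum.Plus o_def simp del: UNIV_Plus_UNIV split: sum.split)

lemma blk_add: "blk A B C + blk A' B' C' = blk (A + A') (B + B') (C + C')"
  unfolding blk_def by (auto simp: vec_eq_iff split: sum.split)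

lemma blk_zero: "(0::'k::field^('n::finite+'m::finite)^('n+'m)) = blk 0 0 0"
  unfolding blk_def by (auto simp: vec_eq_iff split: sum.split)

lemma blk_eq: "blk A B C = blk A' B' C' \<longleftrightarrow> A = A' \<and> B = B' \<and> C = C'"
proof
  assume h: "blk A B C = blk A' B' C'"
  have "\<And>i j. blk A B C $ i $ j = blk A' B' C' $ i $ j" using h by simp
  then show "A = A' \<and> B = B' \<and> C = C'"
    unfolding blk_def vec_eq_iff by (metis (no_types, lifting) case_prod_conv sum.case vec_lambda_beta)
qed simp

lemma exhaust_5:
  fixes x :: 5
  shows "x = 1 \<or> x = 2 \<or> x = 3 \<or> x = 4 \<or> x = 5"
proof (induct x)
  case (of_int z)
  then have "z = 0 \<or> z = 1 \<or> z = 2 \<or> z = 3 \<or> z = 4" by fastforce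
  then show ?case by auto
qed

lemma V1a_mm: "(V1 Ga ** (X::'k::field^'m^3)) $ i $ j = (if i = 1 then 0 else if i = 2 then X$1$j else X$2$j)"
  using exhaust_3[of i] by (auto simp: V1_def matrix_matrix_mult_def sum_3)
lemma V1b_mm: "(V1 Gb ** (X::'k::field^'m^3)) $ i $ j = (if i = 1 then X$2$j else if i = 2 then X$3$j else 0)"
  using exhaust_3[of i] by (auto simp: V1_def matrix_matrix_mult_def sum_3)
lemma V1c_mm: "(V1 Gc ** (X::'k::field^'m^3)) $ i $ j = (if i = 2 then 0 else X$i$j)"
  using exhaust_3[of i] by (auto simp: V1_def matrix_matrix_mult_def sum_3)
lemma V1_ent: "V1 Ga $ i $ j = (if (i = 2 \<and> j = 1) \<or> (i = 3 \<and> j = 2) then 1 else 0)"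
   "V1 Gb $ i $ j = (if (i = 1 \<and> j = 2) \<or> (i = 2 \<and> j = 3) then 1 else 0)"
   "V1 Gc $ i $ j = (if (i = 1 \<and> j = 1) \<or> (i = 3 \<and> j = 3) then 1 else 0)"
  by (simp_all add: V1_def)

lemma V1_umod:
  assumes "CHAR('k::field) = 2"
  shows "is_umod (V1 :: gen \<Rightarrow> 'k^3^3)"
proof -
  have two: "(2::'k) = 0" using char2 assms by blast
  have "V1 Ga ** V1 Gb + V1 Gb ** V1 Ga = (V1 Gc :: 'k^3^3)"
    by (simp add: vec_eq_iff forall_3 V1a_mm V1b_mm V1c_mm V1_ent two flip: matrix_mul_assoc)
  moreover have "V1 Ga ** V1 Gc + V1 Gc ** V1 Ga = (V1 Ga :: 'k^3^3)"
    by (simp add: vec_eq_iff forall_3 V1a_mm V1b_mm V1c_mm V1_ent two flip: matrix_mul_assoc)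
  moreover have "V1 Gb ** V1 Gc + V1 Gc ** V1 Gb = (V1 Gb :: 'k^3^3)"
    by (simp add: vec_eq_iff forall_3 V1a_mm V1b_mm V1c_mm V1_ent two flip: matrix_mul_assoc)
  moreover have "V1 Ga ** V1 Ga ** V1 Ga ** V1 Ga = (0 :: 'k^3^3)"
    by (simp add: vec_eq_iff forall_3 V1a_mm V1b_mm V1c_mm V1_ent two flip: matrix_mul_assoc)
  moreover have "V1 Gb ** V1 Gb ** V1 Gb ** V1 Gb = (0 :: 'k^3^3)"
    by (simp add: vec_eq_iff forall_3 V1a_mm V1b_mm V1c_mm V1_ent two flip: matrix_mul_assoc)
  moreover have "V1 Gc ** V1 Gc + V1 Gc = (0 :: 'k^3^3)"
    by (simp add: vec_eq_iff forall_3 V1a_mm V1b_mm V1c_mm V1_ent two flip: matrix_mul_assoc)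
  ultimately show ?thesis
    unfolding is_umod_def by blast
qed

lemma forall_1: "(\<forall>j::1. P j) \<longleftrightarrow> P 1"
  by (metis UNIV_1 UNIV_I singletonD)

lemma cocycles_iff:
  assumes "CHAR('k::field) = 2"
  shows "D \<in> cocycles (V0::gen \<Rightarrow> 'k^1^1) (V1::gen \<Rightarrow> 'k^3^3) \<longleftrightarrow>
    D Gc$1$1 = D Ga$2$1 \<and> D Gc$2$1 = 0 \<and> D Gb$1$1 = - D Ga$3$1 \<and> D Gc$3$1 = D Gb$2$1"
proof -
  have two: "(2::'k) = 0" using char2 assms by blast
  have u: "is_umod (V1 :: gen \<Rightarrow> 'k^3^3)" using V1_umod assms by blast
  have u0: "is_umod (V0 :: gen \<Rightarrow> 'k^1^1)" by (simp add: is_umod_def V0_def)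
  have "D \<in> cocycles (V0::gen \<Rightarrow> 'k^1^1) (V1::gen \<Rightarrow> 'k^3^3) \<longleftrightarrow>
    V1 Ga ** D Gb + V1 Gb ** D Ga = D Gc \<and> V1 Ga ** D Gc + V1 Gc ** D Ga = D Ga \<and>
    V1 Gb ** D Gc + V1 Gc ** D Gb = D Gb \<and> V1 Ga ** (V1 Ga ** (V1 Ga ** D Ga)) = 0 \<and>
    V1 Gb ** (V1 Gb ** (V1 Gb ** D Gb)) = 0 \<and> V1 Gc ** D Gc + D Gc = 0"
    using u u0 unfolding cocycles_def is_umod_def block_mod_blk blk_mult blk_add blk_zero blk_eq
    by (simp add: V0_def matrix_mul_assoc)
  also have "\<dots> \<longleftrightarrow> D Gc$1$1 = D Ga$2$1 \<and> D Gc$2$1 = 0 \<and> D Gb$1$1 = - D Ga$3$1 \<and> D Gc$3$1 = D Gb$2$1"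
    apply (simp add: vec_eq_iff forall_3 forall_1 V1a_mm V1b_mm V1c_mm)
    apply (auto simp: two eq_neg_iff_add_eq_0 add.commute)
    done
  finally show ?thesis .
qed

definition col3 :: "'k \<Rightarrow> 'k \<Rightarrow> 'k \<Rightarrow> 'k::field^1^3" where
  "col3 p q r = (\<chi> i j. if i = 1 then p else if i = 2 then q else r)"

definition phi5 :: "'k::field^5 \<Rightarrow> gen \<Rightarrow> 'k^1^3" where
  "phi5 x g = (case g of Ga \<Rightarrow> col3 (x$1) (x$2) (x$3) | Gb \<Rightarrow> col3 (-(x$3)) (x$4) (x$5)
      | Gc \<Rightarrow> col3 (x$2) 0 (x$4))"

definition phi3 :: "'k::field^3 \<Rightarrow> gen \<Rightarrow> 'k^1^3" where
  "phi3 h g = V1 g ** (\<chi> i j. h $ i)"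

lemma col3_ent: "col3 p q r $ i $ j = (if i = 1 then p else if i = 2 then q else r)"
  by (simp add: col3_def)

lemma cocycles_eq:
  assumes "CHAR('k::field) = 2"
  shows "cocycles (V0::gen \<Rightarrow> 'k^1^1) (V1::gen \<Rightarrow> 'k^3^3) = range phi5"
proof (intro set_eqI iffI)
  fix D :: "gen \<Rightarrow> 'k^1^3"
  assume "D \<in> cocycles V0 V1"
  then have c: "D Gc$1$1 = D Ga$2$1 \<and> D Gc$2$1 = 0 \<and> D Gb$1$1 = - D Ga$3$1 \<and> D Gc$3$1 = D Gb$2$1"
    using cocycles_iff[OF assms] by blast
  define x :: "'k^5" where "x = (\<chi> i. if i = 1 then D Ga$1$1 else if i = 2 then D Ga$2$1 else
     if i = 3 then D Ga$3$1 else if i = 4 then D Gb$2$1 else D Gb$3$1)"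
  have "D = phi5 x"
  proof
    fix g show "D g = phi5 x g"
      using c by (cases g) (auto simp: phi5_def x_def vec_eq_iff forall_3 forall_1 col3_ent)
  qed
  then show "D \<in> range phi5" by blast
next
  fix D :: "gen \<Rightarrow> 'k^1^3"
  assume "D \<in> range phi5"
  then obtain x where "D = phi5 x" by blast
  then show "D \<in> cocycles V0 V1"
    using cocycles_iff[OF assms] by (simp add: phi5_def col3_ent)
qed

lemma phi5_props:
  "phi5 (x + y) = phi5 x + phi5 y" "phi5 (c *s x) = hom_scale c (phi5 x)" "inj phi5"
proof -
  show "phi5 (x + y) = phi5 x + phi5 y"
    by (rule ext, case_tac xa) (auto simp: phi5_def vec_eq_iff col3_ent)
  show "phi5 (c *s x) = hom_scale c (phi5 x)"
    by (rule ext, case_tac xa) (auto simp: phi5_def vec_eq_iff col3_ent hom_scale_def)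
  show "inj phi5"
  proof (rule injI)
    fix x y assume h: "phi5 x = phi5 y"
    have "\<And>g i. phi5 x g $ i $ 1 = phi5 y g $ i $ 1" using h by simp
    from this[of Ga 1] this[of Ga 2] this[of Ga 3] this[of Gb 2] this[of Gb 3]
    have "x$1 = y$1" "x$2 = y$2" "x$3 = y$3" "x$4 = y$4" "x$5 = y$5"
      by (simp_all add: phi5_def col3_ent)
    then show "x = y" unfolding vec_eq_iff using exhaust_5 by metis
  qed
qed

lemma coboundaries_eq:
  "coboundaries (V0::gen \<Rightarrow> 'k::field^1^1) (V1::gen \<Rightarrow> 'k^3^3) = range phi3"
proof (intro set_eqI iffI)
  fix D :: "gen \<Rightarrow> 'k^1^3"
  assume "D \<in> coboundaries V0 V1"
  then obtain h :: "'k^1^3" where h: "\<And>g. D g = V1 g ** h - h ** V0 g"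
    unfolding coboundaries_def by blast
  have "h = (\<chi> i j. (\<chi> i. h$i$1) $ i)" by (simp add: vec_eq_iff forall_1)
  then have "D = phi3 (\<chi> i. h$i$1)"
    using h by (auto simp: phi3_def V0_def fun_eq_iff)
  then show "D \<in> range phi3" by blast
next
  fix D :: "gen \<Rightarrow> 'k^1^3"
  assume "D \<in> range phi3"
  then obtain x where "D = phi3 x" by blast
  then show "D \<in> coboundaries V0 V1"
    unfolding coboundaries_def by (auto simp: phi3_def V0_def)
qed

lemma phi3_props:
  "phi3 (x + y) = phi3 x + phi3 y" "phi3 (c *s x) = hom_scale c (phi3 x)" "inj phi3"
proof -
  show "phi3 (x + y) = phi3 x + phi3 y"
    by (rule ext) (simp add: phi3_def vec_eq_iff matrix_matrix_mult_def sum.distrib algebra_simps)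
  show "phi3 (c *s x) = hom_scale c (phi3 x)"
    by (rule ext) (simp add: phi3_def vec_eq_iff matrix_matrix_mult_def hom_scale_def sum_distrib_left algebra_simps)
  show "inj phi3"
  proof (rule injI)
    fix x y assume h: "phi3 x = phi3 y"
    have "\<And>g i. phi3 x g $ i $ 1 = phi3 y g $ i $ 1" using h by simp
    from this[of Ga 2] this[of Ga 3] this[of Gb 2]
    have "x$1 = y$1" "x$2 = y$2" "x$3 = y$3"
      by (simp_all add: phi3_def V1a_mm V1b_mm)
    then show "x = y" unfolding vec_eq_iff using exhaust_3 by metis
  qed
qed

lemma ext1_V0_V1:
  assumes "CHAR('k::field) = 2"
  shows "ext1_dim (V0 :: gen \<Rightarrow> 'k^1^1) (V1 :: gen \<Rightarrow> 'k^3^3) = 2"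
proof -
  have "vector_space.dim hom_scale (cocycles (V0 :: gen \<Rightarrow> 'k^1^1) (V1 :: gen \<Rightarrow> 'k^3^3)) = 5"
    unfolding cocycles_eq[OF assms] using dim_param[OF phi5_props] by simp
  moreover have "vector_space.dim hom_scale (coboundaries (V0 :: gen \<Rightarrow> 'k^1^1) (V1 :: gen \<Rightarrow> 'k^3^3)) = 3"
    unfolding coboundaries_eq using dim_param[OF phi3_props] by simp
  ultimately show ?thesis unfolding ext1_dim_def by simp
qed

lemma V1_mv:
  "V1 Ga *v (x::'k::field^3) = (\<chi> i. if i = 1 then 0 else if i = 2 then x$1 else x$2)"
  "V1 Gb *v (x::'k::field^3) = (\<chi> i. if i = 1 then x$2 else if i = 2 then x$3 else 0)"
  "V1 Gc *v (x::'k::field^3) = (\<chi> i. if i = 2 then 0 else x$i)"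
  by (auto simp: V1_def matrix_vector_mult_def sum_3 vec_eq_iff forall_3)

lemma rel_lift:
  fixes \<rho>U :: "gen \<Rightarrow> 'k::field ^'u^'u" and F :: "'k^3^'u"
  assumes um: "is_umod \<rho>U" and hF: "is_umod_hom V1 \<rho>U F" and inj: "inj ((*v) F)"
    and e: "\<And>g. \<rho>U g *v u = F *v e g"
  shows "e Gc$1 = e Ga$2 \<and> e Gc$2 = 0 \<and> e Gb$1 = - (e Ga$3) \<and> e Gc$3 = e Gb$2"
proof -
  have key: "\<And>g w. \<rho>U g *v (F *v w) = F *v (V1 g *v w)"
    using hF unfolding is_umod_hom_def by (metis matrix_vector_mul_assoc)
  have m: "\<And>g h. (\<rho>U g ** \<rho>U h) *v u = F *v (V1 g *v e h)"
    by (metis e key matrix_vector_mul_assoc)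
  have "(\<rho>U Ga ** \<rho>U Gb + \<rho>U Gb ** \<rho>U Ga) *v u = \<rho>U Gc *v u"
    using um unfolding is_umod_def by simp
  then have "F *v (V1 Ga *v e Gb + V1 Gb *v e Ga) = F *v e Gc"
    by (simp add: m e matrix_vector_mult_add_rdistrib matrix_vector_right_distrib)
  then have r1: "V1 Ga *v e Gb + V1 Gb *v e Ga = e Gc"
    using inj by (simp add: inj_eq)
  have "(\<rho>U Ga ** \<rho>U Gc + \<rho>U Gc ** \<rho>U Ga) *v u = \<rho>U Ga *v u"
    using um unfolding is_umod_def by simp
  then have "F *v (V1 Ga *v e Gc + V1 Gc *v e Ga) = F *v e Ga"
    by (simp add: m e matrix_vector_mult_add_rdistrib matrix_vector_right_distrib)
  then have r2: "V1 Ga *v e Gc + V1 Gc *v e Ga = e Ga"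
    using inj by (simp add: inj_eq)
  have "\<forall>i. (V1 Ga *v e Gb + V1 Gb *v e Ga)$i = e Gc$i" using r1 by simp
  then have "(V1 Ga *v e Gb + V1 Gb *v e Ga)$1 = e Gc$1" "(V1 Ga *v e Gb + V1 Gb *v e Ga)$2 = e Gc$2"
    "(V1 Ga *v e Gb + V1 Gb *v e Ga)$3 = e Gc$3" by blast+
  then have a: "e Gc$1 = e Ga$2" "e Gb$1 + e Ga$3 = e Gc$2" "e Gb$2 = e Gc$3"
    by (simp_all add: V1_mv)
  have "\<forall>i. (V1 Ga *v e Gc + V1 Gc *v e Ga)$i = e Ga$i" using r2 by simp
  then have "(V1 Ga *v e Gc + V1 Gc *v e Ga)$3 = e Ga$3" by blast
  then have b: "e Gc$2 + e Ga$3 = e Ga$3"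
    by (simp add: V1_mv)
  show ?thesis using a b by (auto simp: eq_neg_iff_add_eq_0)
qed

definition tl4 :: "'k::field^4 \<Rightarrow> 'k^3" where
  "tl4 y = (\<chi> i. if i = 1 then y$2 else if i = 2 then y$3 else y$4)"

lemma tl4_add: "tl4 (x + y) = tl4 x + tl4 y" and tl4_scale: "tl4 (c *s x) = c *s tl4 x"
  by (auto simp: tl4_def vec_eq_iff)

lemma Vtlm_mv:
  "Vtlm th la mu Ga *v y = (\<chi> i. if i = 2 then th * y$1 else if i = 3 then y$2 else if i = 4 then y$3 else 0)"
  "Vtlm th la mu Gb *v y = (\<chi> i. if i = 2 then y$3 else if i = 3 then la * y$1 + y$4 else if i = 4 then mu * y$1 else 0)"
  "Vtlm th la mu Gc *v y = (\<chi> i. if i = 2 then y$2 else if i = 4 then la * y$1 + y$4 else 0)"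
  by (auto simp: Vtlm_def matrix_vector_mult_def sum_4 vec_eq_iff forall_4)

lemma iso_exists:
  fixes \<rho>U :: "gen \<Rightarrow> 'k::field ^'u^'u" and F :: "'k^3^'u" and G :: "'k^'u^1"
  assumes um: "is_umod \<rho>U" and hF: "is_umod_hom V1 \<rho>U F" and hG: "is_umod_hom \<rho>U V0 G"
    and inj: "inj ((*v) F)" and sG: "surj ((*v) G)"
    and ker: "{x. G *v x = 0} = range ((*v) F)"
  shows "\<exists>th la mu. umod_iso \<rho>U (Vtlm th la mu)"
proof -
  obtain u0 where u0: "G *v u0 = (\<chi> i. 1)" using sG by (metis surjD)
  have GF: "\<And>w. G *v (F *v w) = 0"
  proof -
    fix w have "F *v w \<in> {x. G *v x = 0}" unfolding ker by blast
    then show "G *v (F *v w) = 0" by simp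
  qed
  have Gr: "\<And>g x. G *v (\<rho>U g *v x) = 0"
  proof -
    fix g x
    have "G ** \<rho>U g = 0" using hG unfolding is_umod_hom_def V0_def by simp
    then show "G *v (\<rho>U g *v x) = 0" by (simp add: matrix_vector_mul_assoc)
  qed
  have "\<forall>g. \<exists>w. \<rho>U g *v u0 = F *v w"
  proof
    fix g
    have "\<rho>U g *v u0 \<in> {x. G *v x = 0}" using Gr by simp
    then show "\<exists>w. \<rho>U g *v u0 = F *v w" unfolding ker by blast
  qed
  then obtain d where d: "\<And>g. \<rho>U g *v u0 = F *v d g" by metis
  have key: "\<And>g w. \<rho>U g *v (F *v w) = F *v (V1 g *v w)"
    using hF unfolding is_umod_hom_def by (metis matrix_vector_mul_assoc)
  define h :: "'k^3" where "h = (\<chi> i. if i = 1 then - (d Ga $ 2) else if i = 2 then - (d Ga $ 3) else 0)"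
  define u1 where "u1 = u0 + F *v h"
  define e where "e g = d g + V1 g *v h" for g
  have e1: "\<And>g. \<rho>U g *v u1 = F *v e g"
    unfolding u1_def e_def by (simp add: matrix_vector_right_distrib d key)
  have ea: "e Ga = (\<chi> i. if i = 1 then d Ga $ 1 else 0)"
    by (auto simp: e_def h_def V1_mv vec_eq_iff forall_3)
  have rel: "e Gc$1 = e Ga$2 \<and> e Gc$2 = 0 \<and> e Gb$1 = - (e Ga$3) \<and> e Gc$3 = e Gb$2"
    using rel_lift[OF um hF inj e1] .
  define th where "th = d Ga $ 1"
  define la where "la = e Gb $ 2"
  define mu where "mu = e Gb $ 3"
  have ea': "e Ga = (\<chi> i. if i = 1 then th else 0)" unfolding ea th_def ..
  have eb: "e Gb = (\<chi> i. if i = 1 then 0 else if i = 2 then la else mu)"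
    using rel ea by (auto simp: vec_eq_iff forall_3 la_def mu_def)
  have ec: "e Gc = (\<chi> i. if i = 3 then la else 0)"
    using rel ea by (auto simp: vec_eq_iff forall_3 la_def)
  have Gu1: "G *v u1 = (\<chi> i. 1)" by (simp add: u1_def matrix_vector_right_distrib u0 GF)
  define f where "f y = y$1 *s u1 + F *v tl4 y" for y
  have lin: "Vector_Spaces.linear (*s) (*s) f"
    by (auto simp: Vector_Spaces.linear_iff vec.vector_space_axioms f_def tl4_add tl4_scale
        matrix_vector_right_distrib vector_scalar_commute algebra_simps)
  define P where "P = matrix f"
  have Pf: "(*v) P = f" using matrix_works[OF lin] P_def by auto
  have Gf: "\<And>y. G *v f y = (\<chi> i. y$1)"
    by (simp add: f_def matrix_vector_right_distrib vector_scalar_commute Gu1 GF vec_eq_iff)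
  have injf: "inj f"
  proof (rule injI)
    fix x y assume xy: "f x = f y"
    have "(G *v f x) $ 1 = (G *v f y) $ 1" using xy by simp
    then have 1: "x$1 = y$1" by (simp add: Gf)
    then have "F *v tl4 x = F *v tl4 y" using xy by (simp add: f_def)
    then have "tl4 x = tl4 y" using inj by (simp add: inj_eq)
    then have "tl4 x $ 1 = tl4 y $ 1" "tl4 x $ 2 = tl4 y $ 2" "tl4 x $ 3 = tl4 y $ 3" by simp_all
    then have "x$2 = y$2" "x$3 = y$3" "x$4 = y$4" by (simp_all add: tl4_def)
    with 1 show "x = y" unfolding vec_eq_iff using exhaust_4 by metis
  qed
  have surjf: "surj f" unfolding surj_def
  proof
    fix z
    define t where "t = (G *v z) $ 1"
    have "G *v (z - t *s u1) = 0"
      by (simp add: matrix_vector_mult_diff_distrib vector_scalar_commute Gu1 vec_eq_iff forall_1 t_def)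
    then have "z - t *s u1 \<in> range ((*v) F)" unfolding ker[symmetric] by simp
    then obtain w where w: "z - t *s u1 = F *v w" by blast
    define y :: "'k^4" where "y = (\<chi> j. if j = 1 then t else if j = 2 then w$1 else if j = 3 then w$2 else w$3)"
    have "tl4 y = w" by (simp add: tl4_def y_def vec_eq_iff forall_3)
    then have "f y = t *s u1 + F *v w" by (simp add: f_def y_def)
    also have "\<dots> = z" using w by (simp add: algebra_simps)
    finally show "\<exists>x. z = f x" by metis
  qed
  obtain B where B: "B ** P = mat 1"
    using matrix_left_invertible_injective[of P] injf Pf by auto
  obtain C where C: "P ** C = mat 1"
    using matrix_right_invertible_surjective[of P] surjf Pf by auto
  have BC: "B = C"
    by (metis B C matrix_mul_assoc matrix_mul_lid matrix_mul_rid)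
  have core: "\<And>g y. y$1 *s e g + V1 g *v tl4 y = tl4 (Vtlm th la mu g *v y)"
  proof -
    fix g y show "y$1 *s e g + V1 g *v tl4 y = tl4 (Vtlm th la mu g *v y)"
      by (cases g) (auto simp: ea' eb ec V1_mv Vtlm_mv tl4_def vec_eq_iff forall_3 mult.commute)
  qed
  have first: "\<And>g y. (Vtlm th la mu g *v y) $ 1 = 0"
    by (case_tac g) (simp_all add: Vtlm_mv)
  have inter: "\<And>g. \<rho>U g ** P = P ** Vtlm th la mu g"
  proof -
    fix g
    have "\<And>y. \<rho>U g *v f y = f (Vtlm th la mu g *v y)"
    proof -
      fix y
      have "\<rho>U g *v f y = y$1 *s (F *v e g) + F *v (V1 g *v tl4 y)"
        by (simp add: f_def matrix_vector_right_distrib vector_scalar_commute e1 key)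
      also have "\<dots> = F *v (y$1 *s e g + V1 g *v tl4 y)"
        by (simp add: matrix_vector_right_distrib vector_scalar_commute)
      also have "\<dots> = f (Vtlm th la mu g *v y)"
        by (simp add: core f_def first)
      finally show "\<rho>U g *v f y = f (Vtlm th la mu g *v y)" .
    qed
    then show "\<rho>U g ** P = P ** Vtlm th la mu g"
      unfolding matrix_eq by (simp add: matrix_vector_mul_assoc[symmetric] Pf)
  qed
  have "invertible B" unfolding invertible_def using B C BC by blast
  moreover have "is_umod_hom \<rho>U (Vtlm th la mu) B"
    unfolding is_umod_hom_def
  proof
    fix g
    have "B ** \<rho>U g = B ** \<rho>U g ** (P ** B)" using C BC by simp
    also have "\<dots> = B ** (\<rho>U g ** P) ** B" by (simp add: matrix_mul_assoc)
    also have "\<dots> = (B ** P) ** Vtlm th la mu g ** B" by (simp add: inter matrix_mul_assoc)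
    also have "\<dots> = Vtlm th la mu g ** B" using B by simp
    finally show "B ** \<rho>U g = Vtlm th la mu g ** B" .
  qed
  ultimately show ?thesis unfolding umod_iso_def by blast
qed

theorem lemma3p6:
  fixes \<rho>U :: "gen \<Rightarrow> 'k::alg_closed_field ^'u^'u"
    and F :: "'k^3^'u" and G :: "'k^'u^1"
  assumes "CHAR('k) = 2"
    and "is_umod \<rho>U"
    and "is_umod_hom V1 \<rho>U F" and "is_umod_hom \<rho>U V0 G"
    and "inj ((*v) F)" and "surj ((*v) G)"
    and "{x. G *v x = 0} = range ((*v) F)"
  shows "(\<exists>th la mu. umod_iso \<rho>U (Vtlm th la mu))
         \<and> ext1_dim (V0 :: gen \<Rightarrow> 'k^1^1) (V1 :: gen \<Rightarrow> 'k^3^3) = 2"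
  using iso_exists[OF assms(2-7)] ext1_V0_V1[OF assms(1)] by blast

end
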